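(* Let $G=(V,E,w)$ be a weighted undirected $n$-vertex graph with distinct positive edge weights that contains a Hamiltonian path (no triangle inequality or completeness is assumed), and let $r:V\to\mathbb{R}^+$ be a range assignment. Let $F=(V,E_F)$ be the minimum spanning forest of $S=SDG(G,r)$ and let $H$ be a minimum-weight Hamiltonian path of $G$. Then there is an edge set $\tilde E\subseteq E_F$ with $w(\tilde E)\le w(H)$ such that $F\setminus\tilde E$ contains at least $\frac15\cdot n$ isolated vertices.
   Context: For a weighted graph $G=(V,E,w)$ and $r:V\to\mathbb{R}^+$, the symmetric disk graph $SDG(G,r)$ is the spanning subgraph of $G$ containing an edge $e=(u,v)\in E$ if and only if $r(u)\ge w(e)$ and $r(v)\ge w(e)$. The minimum spanning forest of a weighted graph is a spanning forest with the same connected components and minimum total weight (unique for distinct weights). The weight of an edge set is the sum of its edge weights. *)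

theory Defs
  imports Complex_Main
begin

definition wgraph :: "'a set \<Rightarrow> 'a set set \<Rightarrow> bool" where
  "wgraph V E \<longleftrightarrow> finite V \<and> E \<subseteq> {{u, v} | u v. u \<in> V \<and> v \<in> V \<and> u \<noteq> v}"

definition wt :: "('a set \<Rightarrow> real) \<Rightarrow> 'a set set \<Rightarrow> real" where
  "wt w A = (\<Sum>e\<in>A. w e)"

definition SDG :: "'a set set \<Rightarrow> ('a set \<Rightarrow> real) \<Rightarrow> ('a \<Rightarrow> real) \<Rightarrow> 'a set set" where
  "SDG E w r = {e \<in> E. \<forall>u v. e = {u, v} \<longrightarrow> r u \<ge> w e \<and> r v \<ge> w e}"

definition adj :: "'a set set \<Rightarrow> 'a \<Rightarrow> 'a \<Rightarrow> bool" where
  "adj A u v \<longleftrightarrow> {u, v} \<in> A \<and> u \<noteq> v"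

definition reach :: "'a set set \<Rightarrow> 'a \<Rightarrow> 'a \<Rightarrow> bool" where
  "reach A = (adj A)\<^sup>*\<^sup>*"

definition is_cycle :: "'a set set \<Rightarrow> 'a list \<Rightarrow> bool" where
  "is_cycle A cs \<longleftrightarrow> length cs \<ge> 3 \<and> distinct cs
     \<and> (\<forall>i. Suc i < length cs \<longrightarrow> {cs ! i, cs ! Suc i} \<in> A)
     \<and> {last cs, hd cs} \<in> A"

definition forest :: "'a set set \<Rightarrow> bool" where
  "forest A \<longleftrightarrow> (\<nexists>cs. is_cycle A cs)"

definition spanning_forest :: "'a set \<Rightarrow> 'a set set \<Rightarrow> 'a set set \<Rightarrow> bool" where
  "spanning_forest V S F \<longleftrightarrow> F \<subseteq> S \<and> forest F
     \<and> (\<forall>u\<in>V. \<forall>v\<in>V. reach F u v \<longleftrightarrow> reach S u v)"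

definition min_spanning_forest :: "'a set \<Rightarrow> 'a set set \<Rightarrow> ('a set \<Rightarrow> real) \<Rightarrow> 'a set set \<Rightarrow> bool" where
  "min_spanning_forest V S w F \<longleftrightarrow> spanning_forest V S F
     \<and> (\<forall>F'. spanning_forest V S F' \<longrightarrow> wt w F \<le> wt w F')"

definition ham_path :: "'a set \<Rightarrow> 'a set set \<Rightarrow> 'a list \<Rightarrow> bool" where
  "ham_path V E p \<longleftrightarrow> distinct p \<and> set p = V
     \<and> (\<forall>i. Suc i < length p \<longrightarrow> {p ! i, p ! Suc i} \<in> E)"

definition path_edges :: "'a list \<Rightarrow> 'a set set" where
  "path_edges p = {{p ! i, p ! Suc i} | i. Suc i < length p}"

definition min_ham_path :: "'a set \<Rightarrow> 'a set set \<Rightarrow> ('a set \<Rightarrow> real) \<Rightarrow> 'a list \<Rightarrow> bool" where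
  "min_ham_path V E w p \<longleftrightarrow> ham_path V E p
     \<and> (\<forall>q. ham_path V E q \<longrightarrow> wt w (path_edges p) \<le> wt w (path_edges q))"

definition isolated :: "'a set \<Rightarrow> 'a set set \<Rightarrow> 'a set" where
  "isolated V A = {v \<in> V. \<forall>e\<in>A. v \<notin> e}"

end

theory Submission
  imports Defs
begin

lemma adj_sym: "adj A u v \<Longrightarrow> adj A v u" by (auto simp: adj_def insert_commute)

lemma reach_refl[simp]: "reach A u u" by (simp add: reach_def)

lemma reach_trans: "reach A u v \<Longrightarrow> reach A v x \<Longrightarrow> reach A u x"
  unfolding reach_def by (rule rtranclp_trans)

lemma reach_sym: "reach A u v \<Longrightarrow> reach A v u"
  unfolding reach_def
proof (induction rule: rtranclp_induct)
  case base then show ?case by simp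
next
  case (step y z)
  then show ?case by (meson adj_sym converse_rtranclp_into_rtranclp)
qed

lemma reach_edge: "{u,v} \<in> A \<Longrightarrow> reach A u v"
  unfolding reach_def by (cases "u = v") (auto simp: adj_def)

lemma reach_sub:
  assumes "\<And>a b. adj A a b \<Longrightarrow> reach B a b" and "reach A u v"
  shows "reach B u v"
  using assms(2) unfolding reach_def[of A]
proof (induction rule: rtranclp_induct)
  case base then show ?case by simp
next
  case (step y z)
  from step.hyps(2) have "reach B y z" by (rule assms(1))
  with step.IH show ?case by (rule reach_trans)
qed

lemma reach_sub_edges:
  assumes "\<And>a b. {a,b} \<in> A \<Longrightarrow> reach B a b" and "reach A u v"
  shows "reach B u v"
proof (rule reach_sub[of A B])
  fix a b assume "adj A a b" then show "reach B a b" using assms(1) by (simp add: adj_def)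
qed (rule assms(2))

lemma reach_mono: "A \<subseteq> B \<Longrightarrow> reach A u v \<Longrightarrow> reach B u v"
proof (rule reach_sub_edges[of A])
  fix a b assume "A \<subseteq> B" "{a,b} \<in> A" then show "reach B a b" by (intro reach_edge) blast
qed

lemma reach_insert:
  "reach (insert {x,y} A) u v \<longleftrightarrow> reach A u v \<or> (reach A u x \<and> reach A y v) \<or> (reach A u y \<and> reach A x v)"
proof
  assume "reach (insert {x,y} A) u v"
  then show "reach A u v \<or> (reach A u x \<and> reach A y v) \<or> (reach A u y \<and> reach A x v)"
    unfolding reach_def[of "insert {x,y} A"]
  proof (induction rule: rtranclp_induct)
    case base then show ?case by simp
  next
    case (step b c)
    from step(2) have "{b,c} = {x,y} \<or> reach A b c"
      by (auto simp: adj_def intro: reach_edge)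
    then show ?case
    proof
      assume "{b,c} = {x,y}"
      then have "(b = x \<and> c = y) \<or> (b = y \<and> c = x)" by (auto simp: doubleton_eq_iff)
      then show ?case using step(3) by (metis reach_refl reach_sym reach_trans)
    next
      assume "reach A b c"
      then show ?case using step(3) by (metis reach_trans)
    qed
  qed
next
  have e: "reach (insert {x,y} A) x y" "reach (insert {x,y} A) y x"
    by (auto intro: reach_edge simp: insert_commute)
  have m: "reach A a b \<Longrightarrow> reach (insert {x,y} A) a b" for a b
    by (rule reach_mono[of A]) auto
  assume "reach A u v \<or> (reach A u x \<and> reach A y v) \<or> (reach A u y \<and> reach A x v)"
  then show "reach (insert {x,y} A) u v" using e m reach_trans by metis
qed

lemma reach_insert_conn: "reach A x y \<Longrightarrow> reach (insert {x,y} A) = reach A"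
  by (intro ext) (metis reach_insert reach_trans reach_sym)

definition cls :: "'a set \<Rightarrow> 'a set set \<Rightarrow> 'a set set" where
  "cls V A = (\<lambda>u. {v\<in>V. reach A u v}) ` V"

lemma cls_finite: "finite V \<Longrightarrow> finite (cls V A)"
  by (simp add: cls_def)

lemma cls_pos: "finite V \<Longrightarrow> V \<noteq> {} \<Longrightarrow> card (cls V A) \<ge> 1"
  using cls_finite[of V A] by (auto simp: cls_def Suc_le_eq card_gt_0_iff)

lemma class_eq:
  assumes "u \<in> V" "x \<in> V"
  shows "{v\<in>V. reach A u v} = {v\<in>V. reach A x v} \<longleftrightarrow> reach A u x"
proof
  assume "{v\<in>V. reach A u v} = {v\<in>V. reach A x v}"
  then have "x \<in> {v\<in>V. reach A u v}" using assms by auto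
  then show "reach A u x" by simp
next
  assume "reach A u x"
  then show "{v\<in>V. reach A u v} = {v\<in>V. reach A x v}"
    by (metis reach_sym reach_trans)
qed

lemma cls_merge:
  assumes fin: "finite V" and xV: "x \<in> V" and yV: "y \<in> V" and nr: "\<not> reach A x y"
  shows "card (cls V (insert {x,y} A)) + 1 = card (cls V A)"
proof -
  define C where "C = (\<lambda>u. {v\<in>V. reach A u v})"
  define W where "W = C ` {u\<in>V. \<not> reach A u x \<and> \<not> reach A u y}"
  have Ceq: "C u = C v \<longleftrightarrow> reach A u v" if "u \<in> V" "v \<in> V" for u v
    unfolding C_def using class_eq[OF that] .
  have cls1: "cls V A = insert (C x) (insert (C y) W)"
  proof (rule set_eqI)
    fix S
    show "S \<in> cls V A \<longleftrightarrow> S \<in> insert (C x) (insert (C y) W)"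
    proof
      assume "S \<in> cls V A"
      then obtain u where u: "u \<in> V" "S = C u" unfolding cls_def C_def by auto
      show "S \<in> insert (C x) (insert (C y) W)"
      proof (cases "reach A u x \<or> reach A u y")
        case True then show ?thesis using u Ceq xV yV by auto
      next
        case False then show ?thesis using u unfolding W_def by auto
      qed
    next
      assume "S \<in> insert (C x) (insert (C y) W)"
      then show "S \<in> cls V A" unfolding cls_def C_def W_def using xV yV by auto
    qed
  qed
  have C': "{v\<in>V. reach (insert {x,y} A) u v} = (if reach A u x \<or> reach A u y then C x \<union> C y else C u)"
    if "u \<in> V" for u
  proof (cases "reach A u x")
    case True
    then have "\<not> reach A u y" using nr by (metis reach_sym reach_trans)
    have "reach (insert {x,y} A) u v \<longleftrightarrow> reach A x v \<or> reach A y v" for v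
      unfolding reach_insert using True \<open>\<not> reach A u y\<close> by (metis reach_sym reach_trans)
    then show ?thesis using True unfolding C_def by auto
  next
    case False
    show ?thesis
    proof (cases "reach A u y")
      case True
      have "reach (insert {x,y} A) u v \<longleftrightarrow> reach A x v \<or> reach A y v" for v
        unfolding reach_insert using True False by (metis reach_sym reach_trans)
      then show ?thesis using True unfolding C_def by auto
    next
      case False2: False
      have "reach (insert {x,y} A) u v \<longleftrightarrow> reach A u v" for v
        unfolding reach_insert using False False2 by blast
      then show ?thesis using False False2 unfolding C_def by auto
    qed
  qed
  have cls2: "cls V (insert {x,y} A) = insert (C x \<union> C y) W"
  proof -
    have "cls V (insert {x,y} A) = (\<lambda>u. if reach A u x \<or> reach A u y then C x \<union> C y else C u) ` V"
      unfolding cls_def using C' by (intro image_cong) auto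
    also have "\<dots> = insert (C x \<union> C y) W"
    proof (rule set_eqI)
      fix S
      show "S \<in> (\<lambda>u. if reach A u x \<or> reach A u y then C x \<union> C y else C u) ` V \<longleftrightarrow> S \<in> insert (C x \<union> C y) W"
      proof
        assume "S \<in> (\<lambda>u. if reach A u x \<or> reach A u y then C x \<union> C y else C u) ` V"
        then obtain u where "u \<in> V" "S = (if reach A u x \<or> reach A u y then C x \<union> C y else C u)" by auto
        then show "S \<in> insert (C x \<union> C y) W" unfolding W_def by (cases "reach A u x \<or> reach A u y") auto
      next
        assume "S \<in> insert (C x \<union> C y) W"
        then consider "S = C x \<union> C y" | u where "u \<in> V" "\<not> reach A u x" "\<not> reach A u y" "S = C u"
          unfolding W_def by auto
        then show "S \<in> (\<lambda>u. if reach A u x \<or> reach A u y then C x \<union> C y else C u) ` V"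
        proof cases
          case 1
          have "(if reach A x x \<or> reach A x y then C x \<union> C y else C x) = S" using 1 by simp
          then show ?thesis using xV by (intro image_eqI[of _ _ x]) auto
        next
          case 2
          then show ?thesis by (intro image_eqI[of _ _ u]) auto
        qed
      qed
    qed
    finally show ?thesis .
  qed
  have finW: "finite W" using fin by (simp add: W_def)
  have xW: "C x \<notin> W"
  proof
    assume "C x \<in> W"
    then obtain u where "u \<in> V" "\<not> reach A u x" "C x = C u" unfolding W_def by auto
    then show False using Ceq[OF xV, of u] by (metis reach_sym)
  qed
  have yW: "C y \<notin> W"
  proof
    assume "C y \<in> W"
    then obtain u where "u \<in> V" "\<not> reach A u y" "C y = C u" unfolding W_def by auto
    then show False using Ceq[OF yV, of u] by (metis reach_sym)
  qed
  have xy: "C x \<noteq> C y" using Ceq[OF xV yV] nr by simp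
  have uW: "C x \<union> C y \<notin> W"
  proof
    assume "C x \<union> C y \<in> W"
    then obtain u where u: "u \<in> V" "\<not> reach A u x" "C x \<union> C y = C u" unfolding W_def by auto
    have "x \<in> C x" unfolding C_def using xV by simp
    then have "x \<in> C u" using u by auto
    then show False using u unfolding C_def by simp
  qed
  show ?thesis unfolding cls1 cls2 using finW xW yW xy uW by simp
qed

lemma cls_step:
  assumes "finite V" "x \<in> V" "y \<in> V"
  shows "card (cls V A) \<le> card (cls V (insert {x,y} A)) + 1"
proof (cases "reach A x y")
  case True then show ?thesis by (simp add: cls_def reach_insert_conn)
next
  case False then show ?thesis using cls_merge[OF assms False] by simp
qed

lemma cls_bound:
  assumes "finite V" "finite X" "\<forall>e\<in>X. \<exists>x y. e = {x,y} \<and> x \<in> V \<and> y \<in> V"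
  shows "card (cls V A) \<le> card (cls V (A \<union> X)) + card X"
  using assms(2,3)
proof (induction X rule: finite_induct)
  case empty then show ?case by simp
next
  case (insert e X)
  then obtain x y where e: "e = {x,y}" "x \<in> V" "y \<in> V" by auto
  have "card (cls V (A \<union> X)) \<le> card (cls V (insert e (A \<union> X))) + 1"
    using cls_step[OF assms(1) e(2,3)] e(1) by simp
  then show ?case using insert by simp
qed


lemma cycle_edge_removable:
  assumes cyc: "is_cycle B cs"
  shows "reach (B - {{last cs, hd cs}}) = reach B"
proof -
  define e where "e = {last cs, hd cs}"
  let ?l = "length cs"
  from cyc have l3: "?l \<ge> 3" and dist: "distinct cs"
    and ed: "\<forall>i. Suc i < ?l \<longrightarrow> {cs!i, cs!Suc i} \<in> B"
    unfolding is_cycle_def by auto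
  have cne: "cs \<noteq> []" using l3 by auto
  have hd: "hd cs = cs!0" using cne by (simp add: hd_conv_nth)
  have last: "last cs = cs!(?l - 1)" using cne by (simp add: last_conv_nth)
  have ne: "{cs!i, cs!Suc i} \<noteq> e" if "Suc i < ?l" for i
  proof
    assume "{cs!i, cs!Suc i} = e"
    then have "(cs!i = cs!(?l-1) \<and> cs!Suc i = cs!0) \<or> (cs!i = cs!0 \<and> cs!Suc i = cs!(?l-1))"
      unfolding e_def hd last by (auto simp: doubleton_eq_iff)
    then consider "cs!i = cs!(?l-1)" "cs!Suc i = cs!0" | "cs!i = cs!0" "cs!Suc i = cs!(?l-1)" by blast
    then show False
    proof cases
      case 1
      have b: "Suc i < ?l" "0 < ?l" using that l3 by auto
      have "Suc i = 0" using 1(2) nth_eq_iff_index_eq[OF dist b] by simp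
      then show False by simp
    next
      case 2
      have b: "i < ?l" "0 < ?l" "Suc i < ?l" "?l - 1 < ?l" using that l3 by auto
      have "i = 0" using 2(1) nth_eq_iff_index_eq[OF dist b(1,2)] by simp
      moreover have "Suc i = ?l - 1" using 2(2) nth_eq_iff_index_eq[OF dist b(3,4)] by simp
      ultimately show False using l3 by simp
    qed
  qed
  have path: "reach (B - {e}) (cs!0) (cs!k)" if "k < ?l" for k
    using that
  proof (induction k)
    case 0 show ?case by simp
  next
    case (Suc k)
    have "{cs!k, cs!Suc k} \<in> B - {e}" using ed ne Suc.prems by auto
    then have "reach (B - {e}) (cs!k) (cs!Suc k)" by (rule reach_edge)
    then show ?case using Suc by (metis Suc_lessD reach_trans)
  qed
  have he: "reach (B - {e}) (hd cs) (last cs)"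
    using path[of "?l - 1"] l3 unfolding hd last by simp
  have "reach (B - {e}) u v \<longleftrightarrow> reach B u v" for u v
  proof
    assume "reach (B - {e}) u v" then show "reach B u v" by (rule reach_mono[rotated]) auto
  next
    assume "reach B u v"
    then show "reach (B - {e}) u v"
    proof (rule reach_sub_edges[rotated])
      fix a b assume ab: "{a,b} \<in> B"
      show "reach (B - {e}) a b"
      proof (cases "{a,b} = e")
        case True
        then have "(a = last cs \<and> b = hd cs) \<or> (a = hd cs \<and> b = last cs)"
          unfolding e_def by (auto simp: doubleton_eq_iff)
        then show ?thesis using he reach_sym by metis
      next
        case False then show ?thesis using ab by (intro reach_edge) auto
      qed
    qed
  qed
  then show ?thesis unfolding e_def by (intro ext) simp
qed

lemma exists_forest:
  assumes "finite U"
  shows "\<exists>B \<subseteq> U. forest B \<and> reach B = reach U"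
proof -
  define P where "P = (\<lambda>B. B \<subseteq> U \<and> reach B = reach U)"
  have PU: "P U" unfolding P_def by simp
  obtain B where B: "P B" and min: "\<forall>B'. P B' \<longrightarrow> card B \<le> card B'"
    using ex_has_least_nat[of P U card, OF PU] by blast
  have BU: "B \<subseteq> U" and rB: "reach B = reach U" using B unfolding P_def by auto
  have "forest B"
  proof (rule ccontr)
    assume "\<not> forest B"
    then obtain cs where cyc: "is_cycle B cs" unfolding forest_def by blast
    let ?e = "{last cs, hd cs}"
    have eB: "?e \<in> B" using cyc unfolding is_cycle_def by blast
    have "reach (B - {?e}) = reach U" using cycle_edge_removable[OF cyc] rB by simp
    moreover have "B - {?e} \<subseteq> U" using BU by blast
    ultimately have "P (B - {?e})" unfolding P_def by blast
    then have "card B \<le> card (B - {?e})" using min by blast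
    moreover have "finite B" using BU assms by (rule finite_subset)
    then have "card (B - {?e}) < card B" using eB by (rule card_Diff1_less)
    ultimately show False by simp
  qed
  then show ?thesis using BU rB by blast
qed

lemma path_edges_image: "path_edges p = (\<lambda>i. {p!i, p!Suc i}) ` {i. Suc i < length p}"
  by (auto simp: path_edges_def)

lemma path_edges_finite: "finite (path_edges p)"
  unfolding path_edges_image by (intro finite_imageI) (rule finite_subset[of _ "{..<length p}"], auto)

lemma path_reach:
  assumes "k < length p"
  shows "reach (path_edges p) (p!0) (p!k)"
  using assms
proof (induction k)
  case 0 then show ?case by simp
next
  case (Suc k)
  have "{p!k, p!Suc k} \<in> path_edges p" unfolding path_edges_def using Suc.prems by auto
  then show ?case using Suc by (metis Suc_lessD reach_edge reach_trans)
qed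

lemma card_2_le: "card {a, b} \<le> 2"
  by (cases "a = b") auto

lemma path_incident:
  assumes dist: "distinct p"
  shows "card {e \<in> path_edges p. v \<in> e} \<le> 2"
proof (cases "v \<in> set p")
  case False
  have "e \<notin> path_edges p" if "v \<in> e" for e
  proof
    assume "e \<in> path_edges p"
    then obtain i where i: "Suc i < length p" "e = {p!i, p!Suc i}" unfolding path_edges_def by blast
    then have s: "p!i \<in> set p" "p!Suc i \<in> set p" by simp_all
    have "v = p!i \<or> v = p!Suc i" using that i(2) by simp
    then show False using s False by metis
  qed
  then have em: "{e \<in> path_edges p. v \<in> e} = {}" by blast
  show ?thesis unfolding em by simp
next
  case True
  then obtain k where k: "k < length p" "p!k = v" by (auto simp: in_set_conv_nth)
  have "{e \<in> path_edges p. v \<in> e} \<subseteq> {{p!k, p!Suc k}, {p!(k-1), p!k}}"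
  proof
    fix e assume "e \<in> {e \<in> path_edges p. v \<in> e}"
    then have e1: "e \<in> path_edges p" and ve: "v \<in> e" by blast+
    then obtain i where i: "Suc i < length p" "e = {p!i, p!Suc i}" unfolding path_edges_def by blast
    have il: "i < length p" using i(1) by simp
    from ve i(2) k(2) have "p!i = p!k \<or> p!Suc i = p!k" by auto
    then have "i = k \<or> Suc i = k"
    proof
      assume "p!i = p!k" then show ?thesis using nth_eq_iff_index_eq[OF dist il k(1)] by simp
    next
      assume "p!Suc i = p!k" then show ?thesis using nth_eq_iff_index_eq[OF dist i(1) k(1)] by simp
    qed
    then show "e \<in> {{p!k, p!Suc k}, {p!(k-1), p!k}}"
    proof
      assume ik: "i = k" show ?thesis using i(2) unfolding ik by simp
    next
      assume sk: "Suc i = k"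
      have "e = {p!(k-1), p!k}" using i(2) sk by (metis diff_Suc_1)
      then show ?thesis by simp
    qed
  qed
  then have "card {e \<in> path_edges p. v \<in> e} \<le> card {{p!k, p!Suc k}, {p!(k-1), p!k}}"
    by (rule card_mono[rotated]) simp
  then show ?thesis by (rule order_trans[OF _ card_2_le])
qed


lemma sum_Un_le_nonneg:
  fixes f :: "'b \<Rightarrow> real"
  assumes "finite A" "finite B" "\<And>x. x \<in> A \<inter> B \<Longrightarrow> f x \<ge> 0"
  shows "sum f (A \<union> B) \<le> sum f A + sum f B"
proof -
  have "sum f (A \<inter> B) \<ge> 0" using assms(3) by (rule sum_nonneg)
  then show ?thesis using sum_Un[OF assms(1,2), of f] by simp
qed

theorem mainTheorem2:
  fixes V :: "'a set" and E :: "'a set set" and w :: "'a set \<Rightarrow> real"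
    and r :: "'a \<Rightarrow> real" and F :: "'a set set" and H :: "'a list"
  assumes "wgraph V E"
    and "inj_on w E"
    and "\<forall>e\<in>E. w e > 0"
    and "\<exists>p. ham_path V E p"
    and "\<forall>v\<in>V. r v > 0"
    and "min_spanning_forest V (SDG E w r) w F"
    and "min_ham_path V E w H"
  shows "\<exists>Et \<subseteq> F. wt w Et \<le> wt w (path_edges H)
           \<and> real (card (isolated V (F - Et))) \<ge> real (card V) / 5"
proof -
  from assms(1) have finV: "finite V" and Esub: "E \<subseteq> {{u,v}|u v. u\<in>V \<and> v\<in>V \<and> u\<noteq>v}"
    unfolding wgraph_def by auto
  have EPow: "E \<subseteq> Pow V" using Esub by blast
  have finE: "finite E" using finite_subset[OF EPow] finV by simp
  have edge: "\<exists>x y. e = {x,y} \<and> x \<in> V \<and> y \<in> V \<and> x \<noteq> y" if "e \<in> E" for e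
    using Esub that by blast
  have wpos: "\<And>e. e \<in> E \<Longrightarrow> w e > 0" using assms(3) by blast
  define S where "S = SDG E w r"
  have SE: "S \<subseteq> E" unfolding S_def SDG_def by blast
  from assms(6) have sf: "spanning_forest V S F"
    and Fmin: "\<forall>F'. spanning_forest V S F' \<longrightarrow> wt w F \<le> wt w F'"
    unfolding min_spanning_forest_def S_def by auto
  from sf have FS: "F \<subseteq> S" and Freach: "\<forall>u\<in>V. \<forall>v\<in>V. reach F u v \<longleftrightarrow> reach S u v"
    unfolding spanning_forest_def by auto
  have FE: "F \<subseteq> E" using FS SE by blast
  have finF: "finite F" using finite_subset[OF FE finE] .
  from assms(7) have hp: "ham_path V E H" unfolding min_ham_path_def by auto
  then have distH: "distinct H" and setH: "set H = V"
    and HE: "\<forall>i. Suc i < length H \<longrightarrow> {H!i, H!Suc i} \<in> E"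
    unfolding ham_path_def by auto
  define PH where "PH = path_edges H"
  have PHE: "PH \<subseteq> E" unfolding PH_def path_edges_def using HE by blast
  have finPH: "finite PH" unfolding PH_def by (rule path_edges_finite)
  show ?thesis
  proof (cases "V = {}")
    case True
    then have "H = []" using setH by simp
    then have "path_edges H = {}" unfolding path_edges_def by simp
    then show ?thesis using True by (intro exI[of _ "{}"]) (simp add: wt_def)
  next
    case Vne: False
    define cnt where "cnt = (\<lambda>A. card (cls V A))"
    have cnt_pos: "cnt A \<ge> 1" for A unfolding cnt_def using cls_pos[OF finV Vne] .
    have cb: "cnt A \<le> cnt (A \<union> X) + card X" if "X \<subseteq> E" for A X
    proof -
      have "finite X" using finite_subset[OF that finE] .
      moreover have "\<forall>e\<in>X. \<exists>x y. e = {x,y} \<and> x \<in> V \<and> y \<in> V" using that edge by blast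
      ultimately show ?thesis unfolding cnt_def by (rule cls_bound[OF finV])
    qed
    have cmerge: "cnt (insert {a,b} A) + 1 = cnt A" if "a \<in> V" "b \<in> V" "\<not> reach A a b" for A a b
      unfolding cnt_def by (rule cls_merge[OF finV that])
    have PHconn: "reach PH u v" if uV: "u \<in> V" and vV: "v \<in> V" for u v
    proof -
      obtain i where i: "i < length H" "H!i = u" using uV setH by (auto simp: in_set_conv_nth)
      obtain j where j: "j < length H" "H!j = v" using vV setH by (auto simp: in_set_conv_nth)
      have "reach PH (H!0) u" using path_reach[OF i(1)] i(2) unfolding PH_def by simp
      moreover have "reach PH (H!0) v" using path_reach[OF j(1)] j(2) unfolding PH_def by simp
      ultimately show ?thesis by (metis reach_sym reach_trans)
    qed
    have clsPH: "cls V PH = {V}"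
    proof -
      have "{v\<in>V. reach PH u v} = V" if "u \<in> V" for u using PHconn[OF that] by blast
      then show ?thesis unfolding cls_def using Vne by auto
    qed
    define K0 where "K0 = PH \<inter> S"
    define N where "N = PH - S"
    have NE: "N \<subseteq> E" using PHE N_def by blast
    have finN: "finite N" using finite_subset[OF NE finE] .
    have K0N: "K0 \<union> N = PH" unfolding K0_def N_def by blast
    have cntK0: "cnt K0 \<le> card N + 1"
    proof -
      have "cnt K0 \<le> cnt (K0 \<union> N) + card N" using cb[OF NE] .
      moreover have "cnt (K0 \<union> N) = 1" unfolding K0N cnt_def clsPH by simp
      ultimately show ?thesis by simp
    qed
    have low: "\<exists>v. v \<in> h \<and> r v < w h" if "h \<in> N" for h
    proof -
      from that have hE: "h \<in> E" and hS: "h \<notin> S" using PHE N_def by auto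
      from hS hE have "\<not> (\<forall>u v. h = {u, v} \<longrightarrow> r u \<ge> w h \<and> r v \<ge> w h)"
        unfolding S_def SDG_def by blast
      then obtain u v where "h = {u,v}" "\<not> (r u \<ge> w h \<and> r v \<ge> w h)" by blast
      then show ?thesis by (metis insertI1 insertI2 not_le)
    qed
    define z where "z = (\<lambda>h. SOME v. v \<in> h \<and> r v < w h)"
    have zh: "z h \<in> h \<and> r (z h) < w h" if "h \<in> N" for h
      unfolding z_def using someI_ex[OF low[OF that]] .
    have zV: "z h \<in> V" if "h \<in> N" for h
      using zh[OF that] that NE EPow by blast
    have wlow: "w f < w h" if "h \<in> N" "f \<in> F" "z h \<in> f" for h f
    proof -
      have fS: "f \<in> S" using that FS by blast
      then have "f \<in> E" using SE by blast
      then obtain a b where ab: "f = {a,b}" using edge by blast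
      from fS have fc: "\<forall>u v. f = {u, v} \<longrightarrow> r u \<ge> w f \<and> r v \<ge> w f"
        unfolding S_def SDG_def by blast
      have "z h = a \<or> z h = b" using that(3) ab by simp
      then have "r (z h) \<ge> w f" using fc ab by blast
      then show ?thesis using zh[OF that(1)] by simp
    qed
    define validQ where "validQ = (\<lambda>(Q, g::'a set \<Rightarrow> 'a set). Q \<subseteq> F \<and> cnt (K0 \<union> Q) + card Q = cnt K0
       \<and> inj_on g Q \<and> g ` Q \<subseteq> N \<and> (\<forall>q\<in>Q. z (g q) \<in> q))"
    have v0: "validQ ({}, id)" unfolding validQ_def by simp
    have vb: "\<forall>y. validQ y \<longrightarrow> card (fst y) < card F + 1"
    proof (intro allI impI)
      fix y assume "validQ y"
      then have "fst y \<subseteq> F" unfolding validQ_def by (cases y) simp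
      then show "card (fst y) < card F + 1" using card_mono[OF finF] by (simp add: le_imp_less_Suc)
    qed
    obtain QG where QG: "validQ QG" and maxQ: "\<forall>y. validQ y \<longrightarrow> card (fst y) \<le> card (fst QG)"
      using ex_has_greatest_nat[of validQ "({}, id)" "\<lambda>y. card (fst y)" "card F + 1", OF v0 vb] by blast
    obtain Q g where QGe: "QG = (Q, g)" by (cases QG)
    from QG have QF: "Q \<subseteq> F" and cntQ: "cnt (K0 \<union> Q) + card Q = cnt K0" and injg: "inj_on g Q"
      and gN: "g ` Q \<subseteq> N" and gz: "\<forall>q\<in>Q. z (g q) \<in> q"
      unfolding QGe validQ_def by auto
    have finQ: "finite Q" using finite_subset[OF QF finF] .
    define K where "K = K0 \<union> Q"
    have Qmax: "reach K a b" if hN: "h \<in> N" and hg: "h \<notin> g ` Q" and fF: "f \<in> F" and zf: "z h \<in> f"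
      and fab: "f = {a,b}" for h f a b
    proof (rule ccontr)
      assume nr: "\<not> reach K a b"
      have abV: "a \<in> V" "b \<in> V" using fF FE EPow fab by blast+
      have fQ: "f \<notin> Q"
      proof
        assume "f \<in> Q" then have "{a,b} \<in> K" unfolding K_def fab by blast
        then show False using nr reach_edge by metis
      qed
      have m: "cnt (insert {a,b} K) + 1 = cnt K" using cmerge[OF abV nr] .
      have KQ: "K0 \<union> insert f Q = insert {a,b} K" unfolding K_def fab by blast
      have cardQ: "card (insert f Q) = card Q + 1" using fQ finQ by simp
      have inj2: "inj_on (g(f := h)) (insert f Q)"
      proof -
        have "inj_on (g(f := h)) Q" using injg fQ unfolding inj_on_def by auto
        moreover have "(g(f := h)) ` Q = g ` Q" using fQ by auto
        ultimately show ?thesis using hg fQ by simp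
      qed
      have "validQ (insert f Q, g(f := h))"
        unfolding validQ_def
      proof (simp only: prod.case, intro conjI)
        show "insert f Q \<subseteq> F" using QF fF by blast
        show "cnt (K0 \<union> insert f Q) + card (insert f Q) = cnt K0"
          unfolding KQ cardQ using m cntQ unfolding K_def by simp
        show "inj_on (g(f := h)) (insert f Q)" by (rule inj2)
        show "(g(f := h)) ` insert f Q \<subseteq> N" using gN hN fQ by auto
        show "\<forall>q\<in>insert f Q. z ((g(f := h)) q) \<in> q" using gz zf fQ by auto
      qed
      then have "card (insert f Q) \<le> card Q" using maxQ unfolding QGe by fastforce
      then show False using cardQ by simp
    qed
    define validP where "validP = (\<lambda>P. P \<subseteq> F \<and> cnt (K \<union> P) + card P = cnt K)"
    have p0: "validP {}" unfolding validP_def by simp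
    have pb: "\<forall>y. validP y \<longrightarrow> card y < card F + 1"
    proof (intro allI impI)
      fix y assume "validP y"
      then have "y \<subseteq> F" unfolding validP_def by simp
      then show "card y < card F + 1" using card_mono[OF finF] by (simp add: le_imp_less_Suc)
    qed
    obtain P where vP: "validP P" and maxP: "\<forall>y. validP y \<longrightarrow> card y \<le> card P"
      using ex_has_greatest_nat[of validP "{}" card "card F + 1", OF p0 pb] by blast
    from vP have PF: "P \<subseteq> F" and cntP: "cnt (K \<union> P) + card P = cnt K" unfolding validP_def by auto
    have finP: "finite P" using finite_subset[OF PF finF] .
    have PE: "P \<subseteq> E" using PF FE by blast
    have Pmax: "reach (K \<union> P) a b" if fF: "{a,b} \<in> F" for a b
    proof (rule ccontr)
      assume nr: "\<not> reach (K \<union> P) a b"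
      have abV: "a \<in> V" "b \<in> V" using fF FE EPow by blast+
      have fP: "{a,b} \<notin> P" using nr reach_edge by (metis UnI2)
      have "validP (insert {a,b} P)" unfolding validP_def
      proof (intro conjI)
        show "insert {a,b} P \<subseteq> F" using PF fF by blast
        have "K \<union> insert {a,b} P = insert {a,b} (K \<union> P)" by blast
        then show "cnt (K \<union> insert {a,b} P) + card (insert {a,b} P) = cnt K"
          using cmerge[OF abV nr] cntP fP finP by simp
      qed
      then have "card (insert {a,b} P) \<le> card P" using maxP by blast
      then show False using fP finP by simp
    qed
    have Pcross: "\<not> reach K a b" if fP: "{a,b} \<in> P" for a b
    proof
      assume rK: "reach K a b"
      have "reach (K \<union> (P - {{a,b}})) a b" using rK by (rule reach_mono[rotated]) blast
      then have "reach (insert {a,b} (K \<union> (P - {{a,b}}))) = reach (K \<union> (P - {{a,b}}))"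
        by (rule reach_insert_conn)
      moreover have "insert {a,b} (K \<union> (P - {{a,b}})) = K \<union> P" using fP by blast
      ultimately have eqc: "cnt (K \<union> P) = cnt (K \<union> (P - {{a,b}}))" unfolding cnt_def cls_def by simp
      have "cnt K \<le> cnt (K \<union> (P - {{a,b}})) + card (P - {{a,b}})" using cb[of "P - {{a,b}}" K] PE by blast
      moreover have "card (P - {{a,b}}) + 1 = card P" using fP finP
        by (metis card_Diff1_less card_Suc_Diff1 Suc_eq_plus1)
      ultimately show False using eqc cntP by simp
    qed
    have cntK: "cnt K + card Q = cnt K0" using cntQ unfolding K_def .
    have PQN: "card P + card Q \<le> card N"
      using cntP cntK cntK0 cnt_pos[of "K \<union> P"] by linarith
    define U where "U = N - g ` Q"
    have cardgQ: "card (g ` Q) = card Q" using card_image[OF injg] .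
    have cardU: "card U + card Q = card N"
      unfolding U_def using card_Diff_subset[OF finite_imageI[OF finQ] gN] cardgQ
        card_mono[OF finN gN] by simp
    define M where "M = z ` U"
    have finU: "finite U" unfolding U_def using finN by simp
    have UM: "card U \<le> 2 * card M"
    proof -
      have "U = (\<Union>m\<in>M. {h\<in>U. z h = m})" unfolding M_def by blast
      then have "card U \<le> (\<Sum>m\<in>M. card {h\<in>U. z h = m})"
        using card_UN_le[of M "\<lambda>m. {h\<in>U. z h = m}"] finU unfolding M_def by simp
      also have "\<dots> \<le> of_nat (card M) * 2"
      proof (rule sum_bounded_above)
        fix m assume "m \<in> M"
        have "{h\<in>U. z h = m} \<subseteq> {e \<in> PH. m \<in> e}"
          using zh unfolding U_def N_def by blast
        then have "card {h\<in>U. z h = m} \<le> card {e \<in> PH. m \<in> e}"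
          by (rule card_mono[rotated]) (simp add: finPH)
        also have "\<dots> \<le> 2" unfolding PH_def by (rule path_incident[OF distH])
        finally show "card {h\<in>U. z h = m} \<le> 2" .
      qed
      finally show ?thesis by simp
    qed
    have isoeq: "isolated V P = V - \<Union>P" unfolding isolated_def by blast
    have Miso: "M \<subseteq> isolated V P"
    proof
      fix m assume "m \<in> M"
      then obtain h where h: "h \<in> U" "m = z h" unfolding M_def by blast
      have hN: "h \<in> N" and hg: "h \<notin> g ` Q" using h(1) unfolding U_def by auto
      have "m \<notin> f" if fP: "f \<in> P" for f
      proof
        assume mf: "m \<in> f"
        have "f \<in> E" using fP PE by blast
        then obtain a b where fab: "f = {a,b}" using edge by blast
        have "reach K a b" using Qmax[OF hN hg _ _ fab] fP PF mf h(2) by blast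
        then show False using Pcross fP fab by blast
      qed
      then show "m \<in> isolated V P" unfolding isolated_def using zV[OF hN] h(2) by blast
    qed
    have cardM: "card M \<le> card (isolated V P)"
      using card_mono[OF _ Miso] finV unfolding isoeq by simp
    have cardUP: "card (\<Union>P) \<le> 2 * card P"
    proof -
      have "card (\<Union>P) \<le> sum card P" by (rule card_Union_le_sum_card)
      also have "\<dots> \<le> of_nat (card P) * 2"
      proof (rule sum_bounded_above)
        fix f assume "f \<in> P"
        then obtain a b where "f = {a,b}" using PE edge by blast
        then show "card f \<le> 2" using card_2_le by simp
      qed
      finally show ?thesis by simp
    qed
    have cardiso: "card V \<le> card (isolated V P) + card (\<Union>P)"
    proof -
      have "V \<subseteq> (V - \<Union>P) \<union> \<Union>P" by blast
      then have "card V \<le> card ((V - \<Union>P) \<union> \<Union>P)"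
        by (rule card_mono[rotated]) (use finV finP PE EPow in \<open>auto intro: finite_subset\<close>)
      also have "\<dots> \<le> card (V - \<Union>P) + card (\<Union>P)" by (rule card_Un_le)
      finally show ?thesis unfolding isoeq .
    qed
    have count: "real (card V) \<le> 5 * real (card (isolated V P))"
      using cardiso cardUP PQN cardU UM cardM by linarith
    define UU where "UU = K \<union> P"
    have UUS: "UU \<subseteq> S" unfolding UU_def K_def K0_def using QF PF FS by blast
    have UUE: "UU \<subseteq> E" using UUS SE by blast
    have finUU: "finite UU" using finite_subset[OF UUE finE] .
    obtain B where BU: "B \<subseteq> UU" and forB: "forest B" and rB: "reach B = reach UU"
      using exists_forest[OF finUU] by blast
    have sfB: "spanning_forest V S B"
      unfolding spanning_forest_def
    proof (intro conjI ballI)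
      show "B \<subseteq> S" using BU UUS by blast
      show "forest B" by (rule forB)
      fix u v assume uv: "u \<in> V" "v \<in> V"
      show "reach B u v \<longleftrightarrow> reach S u v"
      proof
        assume "reach B u v"
        then have "reach UU u v" using rB by simp
        then show "reach S u v" by (rule reach_mono[rotated]) (rule UUS)
      next
        assume "reach S u v"
        then have "reach F u v" using Freach uv by blast
        then have "reach UU u v" unfolding UU_def by (rule reach_sub_edges[rotated]) (rule Pmax)
        then show "reach B u v" using rB by simp
      qed
    qed
    have wF: "wt w F \<le> wt w B" using Fmin sfB by blast
    have wB: "wt w B \<le> wt w UU" unfolding wt_def
      using sum_mono2[OF finUU BU, of w] wpos UUE by force
    have finK0: "finite K0" unfolding K0_def using finPH by simp
    have wUU: "wt w UU \<le> wt w K0 + wt w Q + wt w P"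
    proof -
      have "wt w UU \<le> wt w K + wt w P" unfolding UU_def wt_def
        by (rule sum_Un_le_nonneg) (use finK0 finQ finP PE wpos in \<open>auto simp: K_def less_imp_le\<close>)
      moreover have "wt w K \<le> wt w K0 + wt w Q" unfolding K_def wt_def
        by (rule sum_Un_le_nonneg) (use finK0 finQ QF FE wpos in \<open>auto intro: less_imp_le\<close>)
      ultimately show ?thesis by simp
    qed
    have wQ: "wt w Q \<le> wt w N"
    proof -
      have "wt w Q \<le> (\<Sum>q\<in>Q. w (g q))" unfolding wt_def
      proof (rule sum_mono)
        fix q assume qQ: "q \<in> Q"
        have "g q \<in> N" using gN qQ by blast
        then show "w q \<le> w (g q)" using wlow[of "g q" q] qQ QF gz by fastforce
      qed
      also have "\<dots> = (\<Sum>h\<in>g ` Q. w h)" using sum.reindex[OF injg, of w] by simp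
      also have "\<dots> \<le> wt w N" unfolding wt_def
        using sum_mono2[OF finN gN, of w] wpos NE by force
      finally show ?thesis .
    qed
    have wPH: "wt w K0 + wt w N = wt w PH" unfolding wt_def K0N[symmetric]
      by (rule sum.union_disjoint[symmetric]) (use finK0 finN in \<open>auto simp: K0_def N_def\<close>)
    have wEt: "wt w (F - P) = wt w F - wt w P" unfolding wt_def by (rule sum_diff[OF finF PF])
    have FP: "F - (F - P) = P" using PF by blast
    show ?thesis
    proof (intro exI[of _ "F - P"] conjI)
      show "F - P \<subseteq> F" by blast
      show "wt w (F - P) \<le> wt w (path_edges H)"
        using wEt wF wB wUU wQ wPH unfolding PH_def by linarith
      show "real (card V) / 5 \<le> real (card (isolated V (F - (F - P))))"
        unfolding FP using count by simp
    qed
  qed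
qed

end
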